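(* Let $K$ be a non-archimedean local field ($p$-field), and let $n>0$ be an integer. If $s_1,\dots,s_t\in V$ satisfy $\mathrm{mod}_K\big(d(s_1\cdots s_i)\big)\in[q^{-n},q^n]$ for every $i\in\{1,\dots,t\}$, then $s_1\cdots s_t\in\Omega_n$.
   Context: $\mathrm{mod}_K$ is the module of $K$ (the factor by which multiplication scales a Haar measure of $K$), $q$ the cardinality of the residue field, $\pi$ a uniformizer (so $\mathrm{mod}_K(\pi)=q^{-1}$), $R=\{x\in K:\mathrm{mod}_K(x)\le 1\}$ the ring of integers and $R^*=\{x\in K:\mathrm{mod}_K(x)=1\}$ its group of units. $\mathrm{sol}(K)$ is the group of matrices $\begin{pmatrix} a&0&x\\0&a^{-1}&y\\0&0&1\end{pmatrix}$ with $a\in K^*$, $x,y\in K$, and $d:\mathrm{sol}(K)\to K^*$ sends such a matrix to $a$. $V=V_1\cup V_1^{-1}$ where $V_1$ is the set of such matrices with $a=\pi^{r}u$, $r\in\{-1,0,1\}$, $u\in R^*$, $x,y\in R$. For $n>0$, $\Omega_n$ is the set of such matrices with $\mathrm{mod}_K(a)\in[q^{-n},q^n]$ and $x,y\in\pi^{-n}R$. *)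

theory Defs
  imports "HOL-Analysis.Analysis"
begin

text \<open>A non-archimedean local field (p-field) K is modelled by a field type 'a together with
  its module modK (the normalized absolute value), the cardinality q of the residue field and a
  uniformizer piK: modK is a multiplicative ultrametric absolute value, discretely valued with
  value group q^Z, modK piK = 1/q, K is complete for modK, and the residue field R/m is finite
  of cardinality q.\<close>

definition ring_of_integers :: "('a::field \<Rightarrow> real) \<Rightarrow> 'a set" where
  "ring_of_integers modK = {x. modK x \<le> 1}"

definition units_of_integers :: "('a::field \<Rightarrow> real) \<Rightarrow> 'a set" where
  "units_of_integers modK = {x. modK x = 1}"

definition residue_rel :: "('a::field \<Rightarrow> real) \<Rightarrow> ('a \<times> 'a) set" where
  "residue_rel modK = {(x, y). x \<in> ring_of_integers modK \<and> y \<in> ring_of_integers modK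
                               \<and> modK (x - y) < 1}"

definition nonarch_local_field :: "('a::field \<Rightarrow> real) \<Rightarrow> nat \<Rightarrow> 'a \<Rightarrow> bool" where
  "nonarch_local_field modK q piK \<longleftrightarrow>
     (\<forall>x. 0 \<le> modK x) \<and> (\<forall>x. modK x = 0 \<longleftrightarrow> x = 0) \<and>
     (\<forall>x y. modK (x * y) = modK x * modK y) \<and>
     (\<forall>x y. modK (x + y) \<le> max (modK x) (modK y)) \<and>
     2 \<le> q \<and>
     modK piK = 1 / real q \<and>
     (\<forall>x. x \<noteq> 0 \<longrightarrow> (\<exists>k::int. modK x = real q powi k)) \<and>
     (\<forall>X :: nat \<Rightarrow> 'a.
        (\<forall>e>0. \<exists>N. \<forall>m\<ge>N. \<forall>n\<ge>N. modK (X m - X n) < e) \<longrightarrow>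
        (\<exists>L. \<forall>e>0. \<exists>N. \<forall>n\<ge>N. modK (X n - L) < e)) \<and>
     finite (ring_of_integers modK // residue_rel modK) \<and>
     card (ring_of_integers modK // residue_rel modK) = q"

text \<open>The matrix (a 0 x; 0 a^-1 y; 0 0 1) as a 3x3 matrix (rows/columns indexed 1,2,3).\<close>
definition solmat :: "'a::field \<Rightarrow> 'a \<Rightarrow> 'a \<Rightarrow> 'a^3^3" where
  "solmat a x y = (\<chi> i j.
      if i = 1 then (if j = 1 then a else if j = 3 then x else 0)
      else if i = 2 then (if j = 2 then inverse a else if j = 3 then y else 0)
      else (if j = 3 then 1 else 0))"

definition sol :: "('a::field^3^3) set" where
  "sol = {solmat a x y | a x y. a \<noteq> 0}"

definition dmap :: "'a::field^3^3 \<Rightarrow> 'a" where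
  "dmap M = M $ 1 $ 1"

definition V1 :: "('a::field \<Rightarrow> real) \<Rightarrow> 'a \<Rightarrow> ('a^3^3) set" where
  "V1 modK piK = {solmat (piK powi r * u) x y | r u x y.
      r \<in> {-1, 0, 1} \<and> u \<in> units_of_integers modK \<and>
      x \<in> ring_of_integers modK \<and> y \<in> ring_of_integers modK}"

definition Vset :: "('a::field \<Rightarrow> real) \<Rightarrow> 'a \<Rightarrow> ('a^3^3) set" where
  "Vset modK piK = V1 modK piK \<union> {M \<in> sol. \<exists>N \<in> V1 modK piK. M ** N = mat 1}"

definition Omega :: "('a::field \<Rightarrow> real) \<Rightarrow> nat \<Rightarrow> 'a \<Rightarrow> nat \<Rightarrow> ('a^3^3) set" where
  "Omega modK q piK n = {solmat a x y | a x y. a \<noteq> 0 \<and>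
      modK a \<in> {real q powi (- int n) .. real q ^ n} \<and>
      x \<in> (\<lambda>r. piK powi (- int n) * r) ` ring_of_integers modK \<and>
      y \<in> (\<lambda>r. piK powi (- int n) * r) ` ring_of_integers modK}"

definition matprod :: "('a::field^3^3) list \<Rightarrow> 'a^3^3" where
  "matprod ss = foldr (**) ss (mat 1)"

end

theory Submission imports Defs begin
lemma solmat_mult: "solmat a x y ** solmat b x' y' = solmat (a*b) (a*x'+x) (inverse a * y' + y)"
  unfolding matrix_matrix_mult_def solmat_def
  by (simp add: vec_eq_iff forall_3 sum_3 field_simps)
lemma mat1_solmat: "(mat 1 :: 'a::field^3^3) = solmat 1 0 0"
  unfolding mat_def solmat_def by (simp add: vec_eq_iff forall_3)
lemma solmat_inj: "solmat a x y = solmat b x' y' \<Longrightarrow> a = b \<and> x = x' \<and> y = y'"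
  unfolding solmat_def by (simp add: vec_eq_iff forall_3)
lemma dmap_solmat: "dmap (solmat a x y) = a" unfolding dmap_def solmat_def by simp

lemma foldr_mult: "foldr (**) ss (M::'a::field^3^3) = matprod ss ** M"
  unfolding matprod_def by (induction ss) (auto simp: matrix_mul_assoc)
lemma matprod_snoc: "matprod (ss @ [s]) = matprod ss ** (s::'a::field^3^3)"
proof -
  have "matprod (ss @ [s]) = foldr (**) ss (s ** mat 1)" by (simp add: matprod_def)
  also have "\<dots> = matprod ss ** (s ** mat 1)" by (rule foldr_mult)
  finally show ?thesis by (simp add: matrix_mul_rid)
qed

definition good :: "('a::field \<Rightarrow> real) \<Rightarrow> 'a^3^3 \<Rightarrow> bool" where
 "good modK M \<longleftrightarrow> (\<exists>a x y. a \<noteq> 0 \<and> M = solmat a x y \<and> (modK x \<le> 1 \<or> modK x \<le> modK a)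
     \<and> (modK y \<le> 1 \<or> modK y \<le> modK (inverse a)))"

locale absv =
  fixes modK :: "'a::field \<Rightarrow> real"
  assumes nn: "\<And>x. 0 \<le> modK x" and z: "\<And>x. modK x = 0 \<longleftrightarrow> x = 0"
   and mul: "\<And>x y. modK (x*y) = modK x * modK y"
   and ult: "\<And>x y. modK (x + y) \<le> max (modK x) (modK y)"
begin
lemma z0: "modK 0 = 0" using z by simp
lemma one: "modK 1 = 1"
proof -
  have e: "modK 1 * modK 1 = modK 1 * 1" using mul[of 1 1] by (simp only: mult_1_right)
  have "modK 1 \<noteq> 0" using z by simp
  from mult_left_cancel[OF this] e show ?thesis by (simp only:)
qed
lemma inv: "modK (inverse x) = inverse (modK x)"
proof (cases "x = 0")
  case True then show ?thesis using z0 by simp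
next
  case False
  have "modK x * modK (inverse x) = 1" using mul[of x "inverse x"] False one by simp
  moreover have "modK x \<noteq> 0" using z False by simp
  ultimately show ?thesis by (simp add: field_simps)
qed
lemma neg: "modK (- x) = modK x"
proof -
  have "modK (-1) * modK (-1) = 1" using mul[of "-1" "-1"] one by simp
  moreover have "0 \<le> modK (-1)" using nn by simp
  ultimately have "modK (-1) = 1"
  proof (cases "modK (-1)" "1::real" rule: linorder_cases)
    case less
    assume h: "modK (-1) * modK (-1) = 1" "0 \<le> modK (-1)"
    have "modK (-1) * modK (-1) \<le> modK (-1) * 1" using less h(2) by (intro mult_left_mono) auto
    then show ?thesis using h less by simp
  next
    case greater
    assume h: "modK (-1) * modK (-1) = 1" "0 \<le> modK (-1)"
    have "1 * modK (-1) \<le> modK (-1) * modK (-1)" using greater by (intro mult_right_mono) auto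
    then show ?thesis using h greater by simp
  qed simp
  thus ?thesis using mul[of "-1" x] by simp
qed
lemma pow: "modK (x ^ n) = modK x ^ n"
  by (induction n) (auto simp: one mul)

lemma main:
  assumes B: "1 \<le> B"
   and good: "\<forall>s\<in>set ss. good modK s"
   and pref: "\<forall>i\<in>{1..length ss}. modK (dmap (matprod (take i ss))) \<in> {inverse B..B}"
  shows "\<exists>P X Y. P \<noteq> 0 \<and> matprod ss = solmat P X Y \<and> modK X \<le> B \<and> modK Y \<le> B"
  using good pref
proof (induction ss rule: rev_induct)
  case Nil
  have "matprod ([]::('a^3^3) list) = solmat 1 0 0" by (simp add: matprod_def mat1_solmat)
  then show ?case using B z0 by (intro exI[of _ 1] exI[of _ 0]) simp
next
  case (snoc s ss)
  have pref': "\<forall>i\<in>{1..length ss}. modK (dmap (matprod (take i ss))) \<in> {inverse B..B}"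
  proof
    fix i assume i: "i \<in> {1..length ss}"
    then have t: "take i (ss @ [s]) = take i ss" by simp
    have "i \<in> {1..length (ss @ [s])}" using i by simp
    from snoc.prems(2)[rule_format, OF this]
    show "modK (dmap (matprod (take i ss))) \<in> {inverse B..B}" unfolding t .
  qed
  have g': "\<forall>s\<in>set ss. good modK s" using snoc.prems(1) by simp
  from snoc.IH[OF g' pref'] obtain P X Y where
    P: "P \<noteq> 0" "matprod ss = solmat P X Y" "modK X \<le> B" "modK Y \<le> B"
    by (elim exE conjE)
  from snoc.prems(1) obtain a x y where s: "a \<noteq> 0" "s = solmat a x y"
     "modK x \<le> 1 \<or> modK x \<le> modK a" "modK y \<le> 1 \<or> modK y \<le> modK (inverse a)"
    unfolding good_def by auto
  have prod: "matprod (ss @ [s]) = solmat (P*a) (P*x+X) (inverse P * y + Y)"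
    using P s by (simp add: matprod_snoc solmat_mult)
  have PB: "modK P \<in> {inverse B..B}"
  proof (cases "ss = []")
    case True
    then have "solmat 1 0 0 = solmat P X Y" using P(2) by (simp add: matprod_def mat1_solmat)
    then have "P = 1" using solmat_inj by metis
    then show ?thesis using one B by (simp add: inverse_le_1_iff)
  next
    case False
    then have "length ss \<in> {1..length ss}" by (simp add: Suc_le_eq)
    from pref'[rule_format, OF this] show ?thesis using P(2) by (simp add: dmap_solmat)
  qed
  have PaB: "modK (P*a) \<in> {inverse B..B}"
    using snoc.prems(2)[rule_format, of "length ss + 1"] prod by (simp add: dmap_solmat)
  have Bpos: "0 < B" using B by simp
  have x1: "modK (P*x) \<le> B"
    using s(3)
  proof
    assume "modK x \<le> 1"
    then have "modK P * modK x \<le> modK P * 1" using nn by (intro mult_left_mono) auto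
    then show ?thesis using PB by (simp add: mul)
  next
    assume "modK x \<le> modK a"
    then have "modK P * modK x \<le> modK P * modK a" using nn by (intro mult_left_mono) auto
    then show ?thesis using PaB by (simp add: mul)
  qed
  have iB: "0 < inverse B" using Bpos by simp
  have "inverse (modK P) \<le> inverse (inverse B)"
    using PB iB by (intro le_imp_inverse_le) auto
  then have iPB: "modK (inverse P) \<le> B" by (simp only: inv inverse_inverse_eq)
  have "inverse (modK (P*a)) \<le> inverse (inverse B)"
    using PaB iB by (intro le_imp_inverse_le) auto
  then have iPaB: "modK (inverse P * inverse a) \<le> B"
    by (simp only: inv inverse_inverse_eq inverse_mult_distrib[symmetric])
  have y1: "modK (inverse P*y) \<le> B"
    using s(4)
  proof
    assume "modK y \<le> 1"
    then have "modK (inverse P) * modK y \<le> modK (inverse P) * 1" using nn by (intro mult_left_mono) auto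
    then show ?thesis using iPB by (simp add: mul)
  next
    assume "modK y \<le> modK (inverse a)"
    then have "modK (inverse P) * modK y \<le> modK (inverse P) * modK (inverse a)" using nn by (intro mult_left_mono) auto
    then show ?thesis using iPaB by (simp add: mul)
  qed
  have f1: "modK (P*x+X) \<le> B" using ult[of "P*x" X] x1 P(3) by auto
  have f2: "modK (inverse P*y+Y) \<le> B" using ult[of "inverse P*y" Y] y1 P(4) by auto
  have f0: "P * a \<noteq> 0" using P(1) s(1) by simp
  have "P * a \<noteq> 0 \<and> matprod (ss @ [s]) = solmat (P*a) (P*x+X) (inverse P*y+Y) \<and>
     modK (P*x+X) \<le> B \<and> modK (inverse P*y+Y) \<le> B"
    using f0 prod f1 f2 by (intro conjI)
  then show ?case
    apply -
    apply (rule exI[of _ "P*a"], rule exI[of _ "P*x+X"], rule exI[of _ "inverse P*y+Y"])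
    apply assumption
    done
qed
end

lemma good_intro:
  assumes "a \<noteq> 0" "M = solmat a x y" "modK x \<le> 1 \<or> modK x \<le> modK a"
    "modK y \<le> 1 \<or> modK y \<le> modK (inverse a)"
  shows "good modK M"
  unfolding good_def
  apply (rule exI[of _ a], rule exI[of _ x], rule exI[of _ y])
  using assms by (intro conjI)

lemma good_V:
  assumes lf: "nonarch_local_field modK q piK" and M: "M \<in> Vset modK piK"
  shows "good modK M"
proof -
  interpret absv modK using lf unfolding nonarch_local_field_def by unfold_locales auto
  have q2: "2 \<le> q" and mpi: "modK piK = 1 / real q" using lf unfolding nonarch_local_field_def by auto
  have pi0: "piK \<noteq> 0" using mpi q2 z0 by auto
  have V1good: "piK powi r * u \<noteq> 0 \<and> N = solmat (piK powi r * u) x y \<and> modK x \<le> 1 \<and> modK y \<le> 1"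
    if "N = solmat (piK powi r * u) x y" "u \<in> units_of_integers modK"
      "x \<in> ring_of_integers modK" "y \<in> ring_of_integers modK" for N r u x y
  proof -
    have "u \<noteq> 0" using that(2) z0 unfolding units_of_integers_def by auto
    then have "piK powi r * u \<noteq> 0" using pi0 by simp
    then show ?thesis using that unfolding ring_of_integers_def by simp
  qed
  show ?thesis
  proof (cases "M \<in> V1 modK piK")
    case True
    then have "\<exists>r u x y. M = solmat (piK powi r * u) x y \<and> r \<in> {-1, 0, 1} \<and> u \<in> units_of_integers modK \<and>
      x \<in> ring_of_integers modK \<and> y \<in> ring_of_integers modK" unfolding V1_def by simp
    then obtain r u x y where h: "M = solmat (piK powi r * u) x y" "u \<in> units_of_integers modK"
      "x \<in> ring_of_integers modK" "y \<in> ring_of_integers modK" by (elim exE conjE)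
    from V1good[OF h] have "piK powi r * u \<noteq> 0" "M = solmat (piK powi r * u) x y" "modK x \<le> 1" "modK y \<le> 1"
      by simp_all
    then show ?thesis by (intro good_intro disjI1)
  next
    case False
    with M have "M \<in> sol \<and> (\<exists>N \<in> V1 modK piK. M ** N = mat 1)" unfolding Vset_def by simp
    then obtain N where N: "M \<in> sol" "N \<in> V1 modK piK" "M ** N = mat 1" by (elim conjE bexE)
    from N(1) have "\<exists>a x y. M = solmat a x y \<and> a \<noteq> 0" unfolding sol_def by simp
    then obtain a x y where a: "M = solmat a x y" "a \<noteq> 0" by (elim exE conjE)
    from N(2) have "\<exists>r u x y. N = solmat (piK powi r * u) x y \<and> r \<in> {-1, 0, 1} \<and> u \<in> units_of_integers modK \<and>
      x \<in> ring_of_integers modK \<and> y \<in> ring_of_integers modK" unfolding V1_def by simp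
    then obtain r u x' y' where h: "N = solmat (piK powi r * u) x' y'" "u \<in> units_of_integers modK"
      "x' \<in> ring_of_integers modK" "y' \<in> ring_of_integers modK" by (elim exE conjE)
    define b where "b = piK powi r * u"
    from V1good[OF h] have b: "N = solmat b x' y'" "modK x' \<le> 1" "modK y' \<le> 1"
      unfolding b_def by simp_all
    have "solmat (a*b) (a*x'+x) (inverse a*y'+y) = solmat 1 0 0"
      using N(3) a b by (simp add: solmat_mult mat1_solmat)
    from solmat_inj[OF this] have e: "x = - (a*x')" "y = - (inverse a * y')"
      by (simp_all add: eq_neg_iff_add_eq_0 add.commute)
    have "modK x = modK a * modK x'" using e by (simp add: neg mul)
    also have "\<dots> \<le> modK a * 1" using b(2) nn by (intro mult_left_mono) auto
    finally have hx: "modK x \<le> modK a" by simp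
    have "modK y = modK (inverse a) * modK y'" using e by (simp add: neg mul)
    also have "\<dots> \<le> modK (inverse a) * 1" using b(3) nn by (intro mult_left_mono) auto
    finally have hy: "modK y \<le> modK (inverse a)" by simp
    show ?thesis using a(2,1) hx hy by (intro good_intro disjI2)
  qed
qed

theorem lemma3:
  fixes modK :: "'a::field \<Rightarrow> real" and q :: nat and piK :: 'a
    and n :: nat and ss :: "('a^3^3) list"
  assumes "nonarch_local_field modK q piK"
    and "n > 0"
    and "ss \<noteq> []"
    and "set ss \<subseteq> Vset modK piK"
    and "\<forall>i\<in>{1..length ss}.
           modK (dmap (matprod (take i ss))) \<in> {real q powi (- int n) .. real q ^ n}"
  shows "matprod ss \<in> Omega modK q piK n"
proof -
  interpret absv modK using assms(1) unfolding nonarch_local_field_def by unfold_locales auto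
  have q2: "2 \<le> q" and mpi: "modK piK = 1 / real q" using assms(1) unfolding nonarch_local_field_def by auto
  have pi0: "piK \<noteq> 0" using mpi q2 z0 by auto
  let ?B = "real q ^ n"
  have B1: "1 \<le> ?B" using q2 by simp
  have iB: "real q powi (- int n) = inverse ?B" by (simp add: power_int_minus)
  have good: "\<forall>s\<in>set ss. good modK s"
  proof
    fix s assume "s \<in> set ss"
    with assms(4) have "s \<in> Vset modK piK" by (rule subsetD)
    then show "good modK s" by (rule good_V[OF assms(1)])
  qed
  have pr: "\<forall>i\<in>{1..length ss}. modK (dmap (matprod (take i ss))) \<in> {inverse ?B..?B}"
    using assms(5) unfolding iB .
  from main[OF B1 good pr] obtain P X Y where P: "P \<noteq> 0" "matprod ss = solmat P X Y" "modK X \<le> ?B" "modK Y \<le> ?B"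
    by (elim exE conjE)
  have "length ss \<in> {1..length ss}" using assms(3) by (simp add: Suc_le_eq)
  from assms(5)[rule_format, OF this] have PB: "modK P \<in> {real q powi (- int n) .. real q ^ n}"
    using P(2) by (simp add: dmap_solmat)
  have mpin: "modK (piK ^ n) = inverse ?B" using mpi by (simp add: pow power_one_over inverse_eq_divide)
  have inpi: "Z \<in> (\<lambda>r. piK powi (- int n) * r) ` ring_of_integers modK" if "modK Z \<le> ?B" for Z
  proof
    show "Z = piK powi (- int n) * (piK ^ n * Z)" using pi0 by (simp add: power_int_minus)
    have "modK (piK ^ n * Z) = inverse ?B * modK Z" by (simp add: mul mpin)
    also have "\<dots> \<le> inverse ?B * ?B" using that by (intro mult_left_mono) auto
    also have "\<dots> = 1" using B1 by (intro left_inverse) linarith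
    finally show "piK ^ n * Z \<in> ring_of_integers modK" unfolding ring_of_integers_def by simp
  qed
  have "P \<noteq> 0 \<and> modK P \<in> {real q powi (- int n) .. real q ^ n} \<and>
      X \<in> (\<lambda>r. piK powi (- int n) * r) ` ring_of_integers modK \<and>
      Y \<in> (\<lambda>r. piK powi (- int n) * r) ` ring_of_integers modK"
    by (intro conjI P(1) PB inpi P(3) P(4))
  then show ?thesis unfolding Omega_def P(2) mem_Collect_eq
    apply -
    apply (rule_tac x=P in exI, rule_tac x=X in exI, rule_tac x=Y in exI)
    apply (rule conjI[OF refl])
    by assumption
qed

end
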